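(* Let $X$ be a countably infinite set. Let $\sigma$ be the map from the lattice $\mathrm{Cl}_{loc}(X)$ of local clones on $X$ into the lattice of partial clones of finite operations on $X$ which sends each local clone $\mathscr C$ to the set of all restrictions of operations of $\mathscr C$ to finite domains (i.e. all $f|_A$ with $f\in\mathscr C$ $n$-ary and $A\subseteq X^n$ finite). Then $\sigma$ is one-to-one and preserves arbitrary joins.
   Context: A clone on $X$ is a set of finitary operations $X^n\to X$ ($n\ge1$) containing all projections $\pi^n_k(x_1,\dots,x_n)=x_k$ and closed under composition. Giving $X$ the discrete topology and $X^{X^n}$ the product topology, a clone is local if for each $n$ its set of $n$-ary operations is closed in $X^{X^n}$; equivalently, an $n$-ary operation $g$ belongs to the clone whenever for every finite $B\subseteq X^n$ some $n$-ary operation of the clone agrees with $g$ on $B$. $\mathrm{Cl}_{loc}(X)$ is the complete lattice of local clones ordered by inclusion (join = smallest local clone containing the union). A partial operation of finite domain on $X$ is a map $A\to X$ with $A\subseteq X^n$ finite for some $n\ge1$. A partial clone of finite operations on $X$ is a set of partial operations of finite domain on $X$ containing all restrictions of projections to finite domains and closed under composition (where the composition $f(g_1,\dots,g_n)$ of partial operations is defined on those tuples where all $g_i$ are defined and $f$ is defined at the resulting tuple). The partial clones of finite operations on $X$, ordered by inclusion, form a complete lattice, whose join of a family is the smallest partial clone of finite operations containing its union. *)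

theory Defs
  imports "HOL-Library.Countable_Set"
begin

text \<open>The base set X is the universe of the type 'a. Tuples in X^n are lists of
length n. An n-ary operation is a pair (n, f) with n >= 1 and f :: 'a list => 'a,
where f is normalised to be undefined on lists whose length is not n.
A partial operation of finite domain is a pair (n, p) with n >= 1 and
p :: 'a list => 'a option whose domain is a finite set of lists of length n.\<close>

type_synonym 'a operation = "nat \<times> ('a list \<Rightarrow> 'a)"
type_synonym 'a poperation = "nat \<times> ('a list \<Rightarrow> 'a option)"

definition tuples :: "nat \<Rightarrow> 'a list set" where
  "tuples n = {xs. length xs = n}"

definition is_op :: "'a operation \<Rightarrow> bool" where
  "is_op F \<longleftrightarrow> fst F \<ge> 1 \<and> (\<forall>xs. length xs \<noteq> fst F \<longrightarrow> snd F xs = undefined)"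

definition proj :: "nat \<Rightarrow> nat \<Rightarrow> 'a operation" where
  "proj n k = (n, \<lambda>xs. if length xs = n then xs ! k else undefined)"

definition comp_op :: "('a list \<Rightarrow> 'a) \<Rightarrow> nat \<Rightarrow> ('a list \<Rightarrow> 'a) list \<Rightarrow> 'a operation" where
  "comp_op f m gs = (m, \<lambda>xs. if length xs = m then f (map (\<lambda>g. g xs) gs) else undefined)"

definition clone :: "'a operation set \<Rightarrow> bool" where
  "clone C \<longleftrightarrow> (\<forall>F\<in>C. is_op F)
     \<and> (\<forall>n k. 1 \<le> n \<and> k < n \<longrightarrow> proj n k \<in> C)
     \<and> (\<forall>n f m gs. (n, f) \<in> C \<and> m \<ge> 1 \<and> length gs = n \<and> (\<forall>g\<in>set gs. (m, g) \<in> C)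
            \<longrightarrow> comp_op f m gs \<in> C)"

definition local_clone :: "'a operation set \<Rightarrow> bool" where
  "local_clone C \<longleftrightarrow> clone C \<and>
     (\<forall>n g. is_op (n, g) \<and>
        (\<forall>B. finite B \<and> B \<subseteq> tuples n \<longrightarrow> (\<exists>f. (n, f) \<in> C \<and> (\<forall>xs\<in>B. f xs = g xs)))
        \<longrightarrow> (n, g) \<in> C)"

definition Cl_loc :: "'a operation set set" where
  "Cl_loc = {C. local_clone C}"

definition loc_join :: "'a operation set set \<Rightarrow> 'a operation set" where
  "loc_join S = \<Inter>{D. local_clone D \<and> \<Union>S \<subseteq> D}"

definition is_pop :: "'a poperation \<Rightarrow> bool" where
  "is_pop P \<longleftrightarrow> fst P \<ge> 1 \<and> dom (snd P) \<subseteq> tuples (fst P) \<and> finite (dom (snd P))"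

definition restr :: "('a list \<Rightarrow> 'a) \<Rightarrow> 'a list set \<Rightarrow> 'a list \<Rightarrow> 'a option" where
  "restr f A = (\<lambda>xs. if xs \<in> A then Some (f xs) else None)"

definition pcomp :: "('a list \<Rightarrow> 'a option) \<Rightarrow> nat \<Rightarrow> ('a list \<Rightarrow> 'a option) list \<Rightarrow> 'a poperation" where
  "pcomp p m gs = (m, \<lambda>xs. if length xs = m \<and> (\<forall>g\<in>set gs. g xs \<noteq> None)
                            then p (map (\<lambda>g. the (g xs)) gs) else None)"

definition partial_clone :: "'a poperation set \<Rightarrow> bool" where
  "partial_clone P \<longleftrightarrow> (\<forall>F\<in>P. is_pop F)
     \<and> (\<forall>n k A. 1 \<le> n \<and> k < n \<and> finite A \<and> A \<subseteq> tuples n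
            \<longrightarrow> (n, restr (\<lambda>xs. xs ! k) A) \<in> P)
     \<and> (\<forall>n p m gs. (n, p) \<in> P \<and> m \<ge> 1 \<and> length gs = n \<and> (\<forall>g\<in>set gs. (m, g) \<in> P)
            \<longrightarrow> pcomp p m gs \<in> P)"

definition pclone_join :: "'a poperation set set \<Rightarrow> 'a poperation set" where
  "pclone_join S = \<Inter>{P. partial_clone P \<and> \<Union>S \<subseteq> P}"

definition sigma :: "'a operation set \<Rightarrow> 'a poperation set" where
  "sigma C = {(n, restr f A) | n f A. (n, f) \<in> C \<and> finite A \<and> A \<subseteq> tuples n}"

end

theory Submission
  imports Defs
begin

lemma dom_restr[simp]: "dom (restr f A) = A"
  by (auto simp: restr_def dom_def)

lemma restr_eq_iff: "restr f A = restr g B \<longleftrightarrow> A = B \<and> (\<forall>x\<in>A. f x = g x)"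
proof
  assume h: "restr f A = restr g B"
  hence "A = B" by (metis dom_restr)
  moreover have "\<forall>x\<in>A. f x = g x"
  proof
    fix x assume x: "x \<in> A"
    have "restr f A x = restr g B x" using h by simp
    thus "f x = g x" using x \<open>A = B\<close> by (simp add: restr_def)
  qed
  ultimately show "A = B \<and> (\<forall>x\<in>A. f x = g x)" by blast
qed (auto simp: restr_def)

lemma sigma_mono: "C \<subseteq> D \<Longrightarrow> sigma C \<subseteq> sigma D"
  by (auto simp: sigma_def)

lemma sigma_pclone:
  assumes "clone C"
  shows "partial_clone (sigma C)"
proof -
  have ops: "\<forall>F\<in>C. is_op F" and pr: "\<forall>n k. 1 \<le> n \<and> k < n \<longrightarrow> proj n k \<in> C"
   and cm: "\<And>n f m gs. (n, f) \<in> C \<Longrightarrow> m \<ge> 1 \<Longrightarrow> length gs = n \<Longrightarrow> (\<forall>g\<in>set gs. (m, g) \<in> C)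
            \<Longrightarrow> comp_op f m gs \<in> C"
    using assms unfolding clone_def by blast+
  have 1: "\<forall>F\<in>sigma C. is_pop F"
  proof
    fix F assume "F \<in> sigma C"
    then obtain n f A where F: "F = (n, restr f A)" "(n,f) \<in> C" "finite A" "A \<subseteq> tuples n"
      unfolding sigma_def by blast
    have "n \<ge> 1" using ops F(2) unfolding is_op_def by fastforce
    thus "is_pop F" using F unfolding is_pop_def by simp
  qed
  have 2: "\<forall>n k A. 1 \<le> n \<and> k < n \<and> finite A \<and> A \<subseteq> tuples n
            \<longrightarrow> (n, restr (\<lambda>xs. xs ! k) A) \<in> sigma C"
  proof (intro allI impI)
    fix n k and A :: "'a list set"
    assume a: "1 \<le> n \<and> k < n \<and> finite A \<and> A \<subseteq> tuples n"
    hence "proj n k \<in> C" using pr by blast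
    moreover have "restr (\<lambda>xs. xs ! k) A = restr (snd (proj n k)) A"
      using a by (force simp: restr_def proj_def tuples_def)
    ultimately show "(n, restr (\<lambda>xs. xs ! k) A) \<in> sigma C"
      using a unfolding sigma_def proj_def by auto
  qed
  have 3: "\<forall>n p m gs. (n, p) \<in> sigma C \<and> m \<ge> 1 \<and> length gs = n \<and> (\<forall>g\<in>set gs. (m, g) \<in> sigma C)
            \<longrightarrow> pcomp p m gs \<in> sigma C"
  proof (intro allI impI)
    fix n p m gs
    assume a: "(n, p) \<in> sigma C \<and> m \<ge> 1 \<and> length gs = n \<and> (\<forall>g\<in>set gs. (m, g) \<in> sigma C)"
    then obtain f A where fA: "p = restr f A" "(n,f) \<in> C" "finite A" "A \<subseteq> tuples n"
      unfolding sigma_def by blast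
    have n1: "n \<ge> 1" using ops fA(2) unfolding is_op_def by fastforce
    define rep where "rep g = (SOME g'. (m, g') \<in> C \<and> g = restr g' (dom g))" for g
    have rep: "(m, rep g) \<in> C \<and> g = restr (rep g) (dom g) \<and> finite (dom g) \<and> dom g \<subseteq> tuples m"
      if gin: "g \<in> set gs" for g
    proof -
      have "(m, g) \<in> sigma C" using a gin by blast
      then obtain g' B where "g = restr g' B" "(m,g') \<in> C" "finite B" "B \<subseteq> tuples m"
        unfolding sigma_def by blast
      hence ex: "\<exists>g'. (m, g') \<in> C \<and> g = restr g' (dom g)" and "finite (dom g)" "dom g \<subseteq> tuples m"
        by auto
      from someI_ex[OF ex] this(2,3) show ?thesis unfolding rep_def by blast
    qed
    define h where "h = snd (comp_op f m (map rep gs))"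
    have hC: "(m, h) \<in> C"
    proof -
      have "comp_op f m (map rep gs) \<in> C" using cm[OF fA(2)] a rep by auto
      thus ?thesis unfolding h_def comp_op_def by simp
    qed
    define D where "D = {xs. length xs = m \<and> (\<forall>g\<in>set gs. g xs \<noteq> None) \<and> p (map (\<lambda>g. the (g xs)) gs) \<noteq> None}"
    obtain g0 where g0: "g0 \<in> set gs" using a n1 by (cases gs) auto
    have Dsub: "D \<subseteq> dom g0" using g0 unfolding D_def by auto
    have Dfin: "finite D" using rep[OF g0] Dsub finite_subset by blast
    have Dt: "D \<subseteq> tuples m" unfolding D_def tuples_def by auto
    have "pcomp p m gs = (m, restr h D)"
    proof -
      have "(\<lambda>xs. if length xs = m \<and> (\<forall>g\<in>set gs. g xs \<noteq> None)
                            then p (map (\<lambda>g. the (g xs)) gs) else None) = restr h D"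
      proof
        fix xs
        show "(if length xs = m \<and> (\<forall>g\<in>set gs. g xs \<noteq> None)
                            then p (map (\<lambda>g. the (g xs)) gs) else None) = restr h D xs"
        proof (cases "xs \<in> D")
          case True
          hence L: "length xs = m" and defd: "\<forall>g\<in>set gs. g xs \<noteq> None"
            and pd: "p (map (\<lambda>g. the (g xs)) gs) \<noteq> None" unfolding D_def by auto
          have eqm: "map (\<lambda>g. the (g xs)) gs = map (\<lambda>g. rep g xs) gs"
          proof (rule map_cong[OF refl])
            fix g assume g: "g \<in> set gs"
            hence "xs \<in> dom g" using defd by auto
            moreover have "g xs = restr (rep g) (dom g) xs" using rep[OF g] by metis
            ultimately show "the (g xs) = rep g xs" by (simp add: restr_def)
          qed
          have "p (map (\<lambda>g. the (g xs)) gs) = Some (f (map (\<lambda>g. the (g xs)) gs))"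
            using pd fA(1) by (auto simp: restr_def split: if_splits)
          moreover have "h xs = f (map (\<lambda>g. rep g xs) gs)"
            using L by (simp add: h_def comp_op_def o_def)
          hence "h xs = f (map (\<lambda>g. the (g xs)) gs)" by (subst eqm)
          ultimately show ?thesis using True L defd by (simp add: restr_def)
        next
          case False
          thus ?thesis unfolding D_def restr_def by auto
        qed
      qed
      thus ?thesis unfolding pcomp_def by simp
    qed
    thus "pcomp p m gs \<in> sigma C" using hC Dfin Dt unfolding sigma_def by blast
  qed
  show ?thesis unfolding partial_clone_def using 1 2 3 by blast
qed

lemma all_ops_local: "local_clone {F. is_op F}"
  unfolding local_clone_def clone_def
  by (auto simp: is_op_def proj_def comp_op_def)

lemma clone_op: "clone C \<Longrightarrow> F \<in> C \<Longrightarrow> is_op F"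
  unfolding clone_def by (elim conjE) simp
lemma clone_proj: "clone C \<Longrightarrow> 1 \<le> n \<Longrightarrow> k < n \<Longrightarrow> proj n k \<in> C"
  unfolding clone_def by (elim conjE) simp
lemma clone_comp: "clone C \<Longrightarrow> (n, f) \<in> C \<Longrightarrow> m \<ge> 1 \<Longrightarrow> length gs = n \<Longrightarrow> (\<forall>g\<in>set gs. (m, g) \<in> C)
   \<Longrightarrow> comp_op f m gs \<in> C"
  unfolding clone_def by (elim conjE) simp
lemma local_loc: "local_clone C \<Longrightarrow> is_op (n, g) \<Longrightarrow>
        (\<And>B. finite B \<Longrightarrow> B \<subseteq> tuples n \<Longrightarrow> (\<exists>f. (n, f) \<in> C \<and> (\<forall>xs\<in>B. f xs = g xs)))
        \<Longrightarrow> (n, g) \<in> C"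
  unfolding local_clone_def by (elim conjE) simp
lemma local_cloneI:
  assumes "\<And>F. F \<in> C \<Longrightarrow> is_op F" "\<And>n k. 1 \<le> n \<Longrightarrow> k < n \<Longrightarrow> proj n k \<in> C"
   "\<And>n f m gs. (n, f) \<in> C \<Longrightarrow> m \<ge> 1 \<Longrightarrow> length gs = n \<Longrightarrow> (\<forall>g\<in>set gs. (m, g) \<in> C)
   \<Longrightarrow> comp_op f m gs \<in> C"
   "\<And>n g. is_op (n, g) \<Longrightarrow>
        (\<forall>B. finite B \<and> B \<subseteq> tuples n \<longrightarrow> (\<exists>f. (n, f) \<in> C \<and> (\<forall>xs\<in>B. f xs = g xs)))
        \<Longrightarrow> (n, g) \<in> C"
  shows "local_clone C"
  unfolding local_clone_def clone_def
  apply (intro conjI ballI allI impI)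
     apply (erule assms(1))
    apply (rule assms(2); simp)
   apply (rule assms(3); simp)
  apply (rule assms(4); simp)
  done

lemma Inter_local:
  fixes Ds :: "'a operation set set"
  assumes "\<And>D. D \<in> Ds \<Longrightarrow> local_clone D" "Ds \<noteq> {}"
  shows "local_clone (\<Inter>Ds)"
proof (rule local_cloneI)
  obtain D0 where D0: "D0 \<in> Ds" using assms(2) by blast
  have c: "\<And>D. D \<in> Ds \<Longrightarrow> clone D" using assms(1) by (simp add: local_clone_def)
  show "is_op F" if "F \<in> \<Inter>Ds" for F
    using clone_op[OF c[OF D0]] that D0 by blast
  show "proj n k \<in> \<Inter>Ds" if "1 \<le> n" "k < n" for n k
    using clone_proj[OF c] that by blast
  show "comp_op f m gs \<in> \<Inter>Ds" if h: "(n, f) \<in> \<Inter>Ds" "m \<ge> 1" "length gs = n" "\<forall>g\<in>set gs. (m, g) \<in> \<Inter>Ds" for n f m gs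
  proof
    fix D assume D: "D \<in> Ds"
    have "\<forall>g\<in>set gs. (m, g) \<in> D" using h(4) D by blast
    thus "comp_op f m gs \<in> D" using clone_comp[OF c[OF D]] h D by blast
  qed
  show "(n, g) \<in> \<Inter>Ds" if h: "is_op (n, g)"
        "\<forall>B. finite B \<and> B \<subseteq> tuples n \<longrightarrow> (\<exists>f. (n, f) \<in> \<Inter>Ds \<and> (\<forall>xs\<in>B. f xs = g xs))" for n g
  proof
    fix D assume D: "D \<in> Ds"
    show "(n, g) \<in> D"
    proof (rule local_loc[OF assms(1)[OF D] h(1)])
      fix B :: "'a list set" assume "finite B" "B \<subseteq> tuples n"
      then obtain f where "(n, f) \<in> \<Inter>Ds" "\<forall>xs\<in>B. f xs = g xs" using h(2) by blast
      thus "\<exists>f. (n, f) \<in> D \<and> (\<forall>xs\<in>B. f xs = g xs)" using D by blast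
    qed
  qed
qed

lemma pclone_proj: "partial_clone P \<Longrightarrow> 1 \<le> n \<Longrightarrow> k < n \<Longrightarrow> finite A \<Longrightarrow> A \<subseteq> tuples n \<Longrightarrow> (n, restr (\<lambda>xs. xs ! k) A) \<in> P"
  unfolding partial_clone_def by (elim conjE) simp
lemma pclone_comp: "partial_clone P \<Longrightarrow> (n, p) \<in> P \<Longrightarrow> m \<ge> 1 \<Longrightarrow> length gs = n \<Longrightarrow> (\<forall>g\<in>set gs. (m, g) \<in> P) \<Longrightarrow> pcomp p m gs \<in> P"
  unfolding partial_clone_def by (elim conjE) simp
lemma pclone_pop: "partial_clone P \<Longrightarrow> F \<in> P \<Longrightarrow> is_pop F"
  unfolding partial_clone_def by (elim conjE) simp
lemma partial_cloneI:
  assumes "\<And>F. F \<in> P \<Longrightarrow> is_pop F"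
    "\<And>n k A. 1 \<le> n \<Longrightarrow> k < n \<Longrightarrow> finite A \<Longrightarrow> A \<subseteq> tuples n \<Longrightarrow> (n, restr (\<lambda>xs. xs ! k) A) \<in> P"
    "\<And>n p m gs. (n, p) \<in> P \<Longrightarrow> m \<ge> 1 \<Longrightarrow> length gs = n \<Longrightarrow> (\<forall>g\<in>set gs. (m, g) \<in> P) \<Longrightarrow> pcomp p m gs \<in> P"
  shows "partial_clone P"
  unfolding partial_clone_def
  apply (intro conjI ballI allI impI)
    apply (erule assms(1))
   apply (rule assms(2); simp)
  apply (rule assms(3); simp)
  done

lemma Inter_pclone:
  fixes Ps :: "'a poperation set set"
  assumes "\<And>P. P \<in> Ps \<Longrightarrow> partial_clone P" "Ps \<noteq> {}"
  shows "partial_clone (\<Inter>Ps)"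
proof (rule partial_cloneI)
  obtain P0 where P0: "P0 \<in> Ps" using assms(2) by blast
  show "is_pop F" if "F \<in> \<Inter>Ps" for F
    using pclone_pop[OF assms(1)[OF P0]] that P0 by blast
  show "(n, restr (\<lambda>xs. xs ! k) A) \<in> \<Inter>Ps" if "1 \<le> n" "k < n" "finite A" "A \<subseteq> tuples n" for n k and A :: "'a list set"
    using pclone_proj[OF assms(1)] that by blast
  show "pcomp p m gs \<in> \<Inter>Ps" if h: "(n, p) \<in> \<Inter>Ps" "m \<ge> 1" "length gs = n" "\<forall>g\<in>set gs. (m, g) \<in> \<Inter>Ps" for n p m gs
  proof
    fix P assume P: "P \<in> Ps"
    have "\<forall>g\<in>set gs. (m, g) \<in> P" using h(4) P by blast
    thus "pcomp p m gs \<in> P" using pclone_comp[OF assms(1)[OF P]] h P by blast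
  qed
qed

lemma loc_join_local:
  assumes "S \<subseteq> Cl_loc"
  shows "local_clone (loc_join S)" and "\<And>C. C \<in> S \<Longrightarrow> C \<subseteq> loc_join S"
proof -
  have "\<Union>S \<subseteq> {F. is_op F}"
  proof
    fix F assume "F \<in> \<Union>S"
    then obtain C where "C \<in> S" "F \<in> C" by blast
    thus "F \<in> {F. is_op F}" using assms clone_op[of C F]
      unfolding Cl_loc_def local_clone_def by blast
  qed
  hence "{F. is_op F} \<in> {D. local_clone D \<and> \<Union> S \<subseteq> D}" using all_ops_local by blast
  thus "local_clone (loc_join S)" unfolding loc_join_def
    by (intro Inter_local) auto
  show "\<And>C. C \<in> S \<Longrightarrow> C \<subseteq> loc_join S" unfolding loc_join_def by blast
qed

lemma local_clone_clone: "local_clone C \<Longrightarrow> clone C"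
  unfolding local_clone_def by blast

lemma sigma_inj: "inj_on sigma Cl_loc"
proof (rule inj_onI)
  have sub: "C \<subseteq> D" if "local_clone C" "local_clone D" "sigma C = sigma D" for C D :: "'b operation set"
  proof
    fix F assume F: "F \<in> C"
    obtain n g where Fng: "F = (n, g)" by (cases F)
    have op: "is_op (n, g)" using F Fng clone_op[OF local_clone_clone[OF that(1)]] by blast
    have "\<exists>f. (n, f) \<in> D \<and> (\<forall>xs\<in>B. f xs = g xs)" if B: "finite B" "B \<subseteq> tuples n" for B
    proof -
      have "(n, restr g B) \<in> sigma D" using \<open>sigma C = sigma D\<close> F Fng B unfolding sigma_def by blast
      then obtain f B' where "restr g B = restr f B'" "(n, f) \<in> D" unfolding sigma_def by blast
      thus ?thesis by (auto simp: restr_eq_iff)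
    qed
    thus "F \<in> D" using local_loc[OF that(2) op] Fng by blast
  qed
  fix C D :: "'b operation set" assume "C \<in> Cl_loc" "D \<in> Cl_loc" "sigma C = sigma D"
  thus "C = D" using sub[of C D] sub[of D C] unfolding Cl_loc_def by auto
qed

lemma join_pres:
  assumes S: "S \<subseteq> Cl_loc"
  shows "sigma (loc_join S) = pclone_join (sigma ` S)"
proof -
  define P where "P = pclone_join (sigma ` S)"
  have LJ: "local_clone (loc_join S)" using loc_join_local[OF S] by blast
  have sigLJ: "partial_clone (sigma (loc_join S))"
    using sigma_pclone[OF local_clone_clone[OF LJ]] .
  have contain: "\<Union>(sigma ` S) \<subseteq> sigma (loc_join S)"
    using loc_join_local(2)[OF S] sigma_mono by blast
  have PsubL: "P \<subseteq> sigma (loc_join S)" unfolding P_def pclone_join_def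
    using sigLJ contain by blast
  have Pcl: "partial_clone P" unfolding P_def pclone_join_def
    by (rule Inter_pclone) (use sigLJ contain in blast)+
  have PS: "\<Union>(sigma ` S) \<subseteq> P" unfolding P_def pclone_join_def by blast
  note Pproj = pclone_proj[OF Pcl] and Pcomp = pclone_comp[OF Pcl]
  define G where "G = {(n, g). is_op (n, g) \<and> (\<forall>B. finite B \<and> B \<subseteq> tuples n \<longrightarrow> (n, restr g B) \<in> P)}"
  have Gloc: "local_clone G"
  proof (rule local_cloneI)
    show "is_op F" if "F \<in> G" for F using that unfolding G_def by auto
  next
    fix n k :: nat assume a0: "1 \<le> n" "k < n"
    hence a: "1 \<le> n \<and> k < n" by simp
    have "restr (snd (proj n k)) B = restr (\<lambda>xs. xs ! k) B" if "B \<subseteq> tuples n" for B :: "'a list set"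
      using that by (force simp: restr_def proj_def tuples_def)
    moreover have "is_op (proj n k :: 'a operation)" using a by (simp add: is_op_def proj_def)
    ultimately show "proj n k \<in> G" using a Pproj unfolding G_def
      by (auto simp: proj_def)
  next
    fix n f m gs assume a0: "(n, f) \<in> G" "1 \<le> m" "length gs = n" "\<forall>g\<in>set gs. (m, g) \<in> G"
    hence a: "(n, f) \<in> G \<and> 1 \<le> m \<and> length gs = n \<and> (\<forall>g\<in>set gs. (m, g) \<in> G)" by simp
    have n1: "n \<ge> 1" using a unfolding G_def is_op_def by auto
    have op: "is_op (comp_op f m gs)" using a by (simp add: is_op_def comp_op_def)
    have "(m, restr (snd (comp_op f m gs)) B) \<in> P" if B: "finite B" "B \<subseteq> tuples m" for B
    proof -
      define A' where "A' = (\<lambda>xs. map (\<lambda>g. g xs) gs) ` B"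
      have A': "finite A'" "A' \<subseteq> tuples n" using B a unfolding A'_def tuples_def by auto
      have fP: "(n, restr f A') \<in> P" using a A' unfolding G_def by auto
      have gP: "\<forall>g\<in>set (map (\<lambda>g. restr g B) gs). (m, g) \<in> P" using a B unfolding G_def by auto
      obtain g0 where g0: "g0 \<in> set gs" using a n1 by (cases gs) auto
      have "pcomp (restr f A') m (map (\<lambda>g. restr g B) gs) = (m, restr (snd (comp_op f m gs)) B)"
      proof -
        have "(\<lambda>xs. if length xs = m \<and> (\<forall>g\<in>set (map (\<lambda>g. restr g B) gs). g xs \<noteq> None)
               then restr f A' (map (\<lambda>g. the (g xs)) (map (\<lambda>g. restr g B) gs)) else None)
              = restr (snd (comp_op f m gs)) B"
        proof
          fix xs
          show "(if length xs = m \<and> (\<forall>g\<in>set (map (\<lambda>g. restr g B) gs). g xs \<noteq> None)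
               then restr f A' (map (\<lambda>g. the (g xs)) (map (\<lambda>g. restr g B) gs)) else None)
              = restr (snd (comp_op f m gs)) B xs"
          proof (cases "xs \<in> B")
            case True
            hence L: "length xs = m" using B unfolding tuples_def by auto
            have eq: "map (\<lambda>g. the (g xs)) (map (\<lambda>g. restr g B) gs) = map (\<lambda>g. g xs) gs"
              using True by (simp add: restr_def)
            have "map (\<lambda>g. g xs) gs \<in> A'" using True unfolding A'_def by auto
            moreover have "\<forall>g\<in>set (map (\<lambda>g. restr g B) gs). g xs \<noteq> None"
              using True by (auto simp: restr_def)
            ultimately show ?thesis using True L unfolding eq
              by (simp add: restr_def comp_op_def)
          next
            case False
            hence "\<not> (\<forall>g\<in>set (map (\<lambda>g. restr g B) gs). g xs \<noteq> None)" using g0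
              by (auto simp: restr_def)
            thus ?thesis using False by (simp add: restr_def)
          qed
        qed
        thus ?thesis unfolding pcomp_def comp_op_def by simp
      qed
      moreover have "pcomp (restr f A') m (map (\<lambda>g. restr g B) gs) \<in> P"
        using Pcomp[OF fP] a gP by simp
      ultimately show ?thesis by simp
    qed
    thus "comp_op f m gs \<in> G" using op unfolding G_def comp_op_def by auto
  next
    fix n g assume a0: "is_op (n, g)"
        "\<forall>B. finite B \<and> B \<subseteq> tuples n \<longrightarrow> (\<exists>f. (n, f) \<in> G \<and> (\<forall>xs\<in>B. f xs = g xs))"
    have "(n, restr g B) \<in> P" if B: "finite B" "B \<subseteq> tuples n" for B
    proof -
      have "\<exists>f. (n, f) \<in> G \<and> (\<forall>xs\<in>B. f xs = g xs)" using a0(2) B by simp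
      then obtain f where f: "(n, f) \<in> G" "\<forall>xs\<in>B. f xs = g xs" by blast
      have "restr g B = restr f B" using f(2) by (auto simp: restr_def)
      thus ?thesis using f(1) that unfolding G_def by auto
    qed
    thus "(n, g) \<in> G" using a0(1) unfolding G_def by simp
  qed
  have "\<Union>S \<subseteq> G"
  proof
    fix F assume "F \<in> \<Union>S"
    then obtain C where C: "C \<in> S" "F \<in> C" by blast
    obtain n g where Fng: "F = (n, g)" by (cases F)
    have "local_clone C" using C S unfolding Cl_loc_def by blast
    hence "is_op (n, g)" using C Fng clone_op local_clone_clone by blast
    moreover have "(n, restr g B) \<in> P" if "finite B" "B \<subseteq> tuples n" for B
      using PS C Fng that unfolding sigma_def by blast
    ultimately show "F \<in> G" unfolding G_def Fng by auto
  qed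
  hence "loc_join S \<subseteq> G" using Gloc unfolding loc_join_def by blast
  hence "sigma (loc_join S) \<subseteq> P" unfolding sigma_def G_def by auto
  with PsubL show ?thesis unfolding P_def by blast
qed

theorem proposition2p8:
  assumes "countable (UNIV :: 'a set)" and "infinite (UNIV :: 'a set)"
  shows "(\<forall>C\<in>(Cl_loc :: 'a operation set set). partial_clone (sigma C))
       \<and> inj_on (sigma :: 'a operation set \<Rightarrow> 'a poperation set) Cl_loc
       \<and> (\<forall>S \<subseteq> (Cl_loc :: 'a operation set set). sigma (loc_join S) = pclone_join (sigma ` S))"
proof (intro conjI ballI allI impI)
  fix C :: "'a operation set" assume "C \<in> Cl_loc"
  thus "partial_clone (sigma C)" by (intro sigma_pclone local_clone_clone) (simp add: Cl_loc_def)
next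
  show "inj_on (sigma :: 'a operation set \<Rightarrow> 'a poperation set) Cl_loc" by (rule sigma_inj)
next
  fix S :: "'a operation set set" assume "S \<subseteq> Cl_loc"
  thus "sigma (loc_join S) = pclone_join (sigma ` S)" by (rule join_pres)
qed

end
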